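(* Let $0<q<1$ and let $\lambda$ be a partition with at most $n$ parts. Writing $x=(x_1,\dots,x_n)=(q^{u_1},\dots,q^{u_n})$, the function $u\mapsto W_\lambda(q^{u_1},\dots,q^{u_n};q,p,t,a,b)$ is elliptic in each variable $u_i$; that is, for each $i$ it is invariant under $u_i\mapsto u_i+2\pi\sqrt{-1}/\log q$ and under $u_i\mapsto u_i+\log p/\log q$ (the latter meaning $x_i\mapsto px_i$).
   Context: Fix $p\in\mathbb{C}$ with $0<|p|<1$; parameters generic. $E(x)=(x;p)_\infty(p/x;p)_\infty$. For integer $m\ge0$, $(a)_m=\prod_{k=0}^{m-1}E(aq^k)$, for $m<0$, $(a)_m=1/(aq^m)_{-m}$; for a partition $\lambda$ with $n$ parts $(a)_\lambda=\prod_{i=1}^n(at^{1-i})_{\lambda_i}$; several arguments denote products; integer subscripts denote the single-integer symbol. For $n$-part partitions with $\lambda_1\ge\mu_1\ge\dots\ge\lambda_n\ge\mu_n$, $\lambda_{n+1}=\mu_{n+1}=0$, $H_{\lambda/\mu}(q,p,t,b)=\prod_{1\le i<j\le n}\Big\{\frac{(q^{\mu_i-\mu_{j-1}}t^{j-i})_{\mu_{j-1}-\lambda_j}(q^{\lambda_i+\lambda_j}t^{3-j-i}b)_{\mu_{j-1}-\lambda_j}}{(q^{\mu_i-\mu_{j-1}+1}t^{j-i-1})_{\mu_{j-1}-\lambda_j}(q^{\lambda_i+\lambda_j+1}t^{2-j-i}b)_{\mu_{j-1}-\lambda_j}}\frac{(q^{\lambda_i-\mu_{j-1}+1}t^{j-i-1})_{\mu_{j-1}-\lambda_j}}{(q^{\lambda_i-\mu_{j-1}}t^{j-i})_{\mu_{j-1}-\lambda_j}}\Big\}\prod_{1\le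 i<j-1\le n}\frac{(q^{\mu_i+\lambda_j+1}t^{1-j-i}b)_{\mu_{j-1}-\lambda_j}}{(q^{\mu_i+\lambda_j}t^{2-j-i}b)_{\mu_{j-1}-\lambda_j}}$; for $x\in\mathbb{C}$, $W_{\lambda/\mu}(x;q,p,t,a,b)=H_{\lambda/\mu}\frac{(x^{-1},ax)_\lambda(qbx/t,qb/(axt))_\mu}{(x^{-1},ax)_\mu(qbx,qb/(ax))_\lambda}\prod_{i=1}^n\frac{E(bt^{1-2i}q^{2\mu_i})}{E(bt^{1-2i})}\frac{(bt^{1-2i})_{\mu_i+\lambda_{i+1}}}{(bqt^{-2i})_{\mu_i+\lambda_{i+1}}}t^{i(\mu_i-\lambda_{i+1})}$ (zero if the interlacing fails); recursively $W_{\lambda/\mu}(y,z_1,\dots,z_\ell;q,p,t,a,b)=\sum_\nu W_{\lambda/\nu}(yt^{-\ell};q,p,t,at^{2\ell},bt^\ell)W_{\nu/\mu}(z_1,\dots,z_\ell;q,p,t,a,b)$ over $\nu$ with $\lambda_1\ge\nu_1\ge\dots\ge\lambda_n\ge\nu_n\ge0$; $W_\lambda=W_{\lambda/0}$. *)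

theory Defs
  imports "HOL-Analysis.Analysis"
begin

definition qinf :: "complex \<Rightarrow> complex \<Rightarrow> complex" where
  "qinf p x = prodinf (\<lambda>k. 1 - x * p ^ k)"

definition Eth :: "complex \<Rightarrow> complex \<Rightarrow> complex" where
  "Eth p x = qinf p x * qinf p (p / x)"

definition ep :: "complex \<Rightarrow> complex \<Rightarrow> complex \<Rightarrow> int \<Rightarrow> complex" where
  "ep p q a m = (if 0 \<le> m then (\<Prod>k<nat m. Eth p (a * q ^ k))
      else 1 / (\<Prod>k<nat (- m). Eth p (a * q powi m * q ^ k)))"

text \<open>Partitions with at most n parts are lists of length n (padded by zeros);
  part lam i is the i-th part (1-based), and 0 for i outside 1..n.\<close>
definition part :: "nat list \<Rightarrow> nat \<Rightarrow> int" where
  "part lam i = (if 1 \<le> i \<and> i \<le> length lam then int (lam ! (i - 1)) else 0)"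

definition is_partition :: "nat list \<Rightarrow> bool" where
  "is_partition lam = sorted_wrt (\<ge>) lam"

definition epl :: "complex \<Rightarrow> complex \<Rightarrow> complex \<Rightarrow> complex \<Rightarrow> nat list \<Rightarrow> complex" where
  "epl p q t a lam = (\<Prod>i\<in>{1..length lam}. ep p q (a * t powi (1 - int i)) (part lam i))"

definition interlace :: "nat list \<Rightarrow> nat list \<Rightarrow> bool" where
  "interlace lam mu \<longleftrightarrow> length mu = length lam \<and>
     (\<forall>i\<in>{1..length lam}. part mu i \<le> part lam i \<and> part lam (i + 1) \<le> part mu i)"

definition Hfac :: "complex \<Rightarrow> complex \<Rightarrow> complex \<Rightarrow> complex \<Rightarrow> nat list \<Rightarrow> nat list \<Rightarrow> complex" where
  "Hfac p q t b lam mu =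
    (let n = length lam; L = part lam; M = part mu; Q = (\<lambda>k. q powi k); T = (\<lambda>k. t powi k);
         d = (\<lambda>j. M (j - 1) - L j) in
     (\<Prod>j\<in>{1..n}. \<Prod>i\<in>{1..<j}. let ii = int i; jj = int j in
        (ep p q (Q (M i - M (j - 1)) * T (jj - ii)) (d j)
         * ep p q (Q (L i + L j) * T (3 - jj - ii) * b) (d j))
        / (ep p q (Q (M i - M (j - 1) + 1) * T (jj - ii - 1)) (d j)
         * ep p q (Q (L i + L j + 1) * T (2 - jj - ii) * b) (d j))
        * (ep p q (Q (L i - M (j - 1) + 1) * T (jj - ii - 1)) (d j)
           / ep p q (Q (L i - M (j - 1)) * T (jj - ii)) (d j)))
     * (\<Prod>i\<in>{1..n}. \<Prod>j\<in>{i + 2..n + 1}. let ii = int i; jj = int j in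
        ep p q (Q (M i + L j + 1) * T (1 - jj - ii) * b) (d j)
        / ep p q (Q (M i + L j) * T (2 - jj - ii) * b) (d j)))"

definition W1 :: "complex \<Rightarrow> complex \<Rightarrow> complex \<Rightarrow> complex \<Rightarrow> complex \<Rightarrow> nat list \<Rightarrow> nat list \<Rightarrow> complex \<Rightarrow> complex" where
  "W1 p q t a b lam mu x =
    (if interlace lam mu then
      (let n = length lam; L = part lam; M = part mu in
       Hfac p q t b lam mu
       * (epl p q t (1 / x) lam * epl p q t (a * x) lam
          * epl p q t (q * b * x / t) mu * epl p q t (q * b / (a * x * t)) mu)
       / (epl p q t (1 / x) mu * epl p q t (a * x) mu
          * epl p q t (q * b * x) lam * epl p q t (q * b / (a * x)) lam)
       * (\<Prod>i\<in>{1..n}.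
            Eth p (b * t powi (1 - 2 * int i) * q powi (2 * M i)) / Eth p (b * t powi (1 - 2 * int i))
            * (ep p q (b * t powi (1 - 2 * int i)) (M i + L (i + 1))
               / ep p q (b * q * t powi (- 2 * int i)) (M i + L (i + 1)))
            * t powi (int i * (M i - L (i + 1)))))
     else 0)"

fun Wskew :: "complex \<Rightarrow> complex \<Rightarrow> complex \<Rightarrow> complex \<Rightarrow> complex \<Rightarrow> nat list \<Rightarrow> nat list \<Rightarrow> complex list \<Rightarrow> complex" where
  "Wskew p q t a b lam mu [] = (if lam = mu then 1 else 0)"
| "Wskew p q t a b lam mu (y # zs) =
     (\<Sum>nu\<in>{nu. interlace lam nu}.
        W1 p q t (a * t powi (2 * int (length zs))) (b * t powi (int (length zs))) lam nu
           (y * t powi (- int (length zs)))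
        * Wskew p q t a b nu mu zs)"

definition Wpart :: "complex \<Rightarrow> complex \<Rightarrow> complex \<Rightarrow> complex \<Rightarrow> complex \<Rightarrow> nat list \<Rightarrow> complex list \<Rightarrow> complex" where
  "Wpart p q t a b lam xs = Wskew p q t a b lam (replicate (length lam) 0) xs"

end

theory Submission
  imports Defs
begin

lemma qinf_conv: "cmod p < 1 \<Longrightarrow> convergent_prod (\<lambda>k. 1 - x * p ^ k)"
proof -
  assume h: "cmod p < 1"
  have "summable (\<lambda>k. cmod x * cmod p ^ k)"
    using h by (intro summable_mult summable_geometric) auto
  hence "summable (\<lambda>k. norm ((1 - x * p ^ k) - 1))"
    by (simp add: norm_mult norm_power)
  hence "abs_convergent_prod (\<lambda>k. 1 - x * p ^ k)"
    by (rule summable_imp_abs_convergent_prod)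
  thus ?thesis by (rule abs_convergent_prod_imp_convergent_prod)
qed

lemma qinf_shift: "cmod p < 1 \<Longrightarrow> qinf p x = (1 - x) * qinf p (p * x)"
proof -
  assume h: "cmod p < 1"
  have "(\<lambda>k. 1 - x * p ^ k) has_prod ((\<Prod>k<1. 1 - x * p ^ k) * (\<Prod>k. 1 - x * p ^ (k + 1)))"
    by (rule has_prod_ignore_initial_segment'[OF qinf_conv[OF h]])
  hence "qinf p x = (1 - x) * (\<Prod>k. 1 - x * p ^ (k + 1))"
    unfolding qinf_def using has_prod_unique by fastforce
  also have "(\<lambda>k. 1 - x * p ^ (k + 1)) = (\<lambda>k. 1 - (p * x) * p ^ k)"
    by (simp add: fun_eq_iff algebra_simps)
  finally show ?thesis unfolding qinf_def by simp
qed

lemma Eth_shift: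
  assumes "cmod p < 1" "p \<noteq> 0" "x \<noteq> 0"
  shows "Eth p (p * x) = - Eth p x / x"
proof -
  have e1: "Eth p (p * x) = qinf p (p * x) * qinf p (1 / x)"
    unfolding Eth_def using assms by simp
  have e2: "qinf p (1/x) = (1 - 1/x) * qinf p (p / x)"
    using qinf_shift[OF assms(1), of "1/x"] by simp
  have e3: "Eth p x = (1 - x) * qinf p (p * x) * qinf p (p / x)"
    unfolding Eth_def using qinf_shift[OF assms(1), of x] by simp
  show ?thesis using assms(3) unfolding e1 e2 e3 by (simp add: field_simps)
qed

lemma Eth_pair:
  assumes "cmod p < 1" "p \<noteq> 0" "x \<noteq> 0" "d \<noteq> 0" "d' \<noteq> 0"
  shows "Eth p (d / (p * x)) * Eth p (d' * (p * x)) = (d / (d' * p * x^2)) * (Eth p (d / x) * Eth p (d' * x))"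
proof -
  have a: "Eth p (d' * (p * x)) = - Eth p (d' * x) / (d' * x)"
    using Eth_shift[OF assms(1,2), of "d' * x"] assms by (simp add: ac_simps)
  have b: "Eth p (d / x) = - Eth p (d / (p * x)) / (d / (p * x))"
    using Eth_shift[OF assms(1,2), of "d / (p * x)"] assms by simp
  have b': "Eth p (d / (p * x)) = - (d / (p * x)) * Eth p (d / x)"
    using b assms by (simp add: field_simps)
  show ?thesis unfolding a b' using assms by (simp add: field_simps power2_eq_square)
qed

lemma ep_pair:
  assumes "cmod p < 1" "p \<noteq> 0" "x \<noteq> 0" "c \<noteq> 0" "c' \<noteq> 0" "T \<noteq> 0" "q \<noteq> 0"
  shows "ep p q (c / (p * x) * T) (int m) * ep p q (c' * (p * x) * T) (int m)
       = (c / (c' * p * x^2)) ^ m * (ep p q (c / x * T) (int m) * ep p q (c' * x * T) (int m))"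
proof -
  have pt: "Eth p (c / (p * x) * T * q ^ k) * Eth p (c' * (p * x) * T * q ^ k)
      = (c / (c' * p * x^2)) * (Eth p (c / x * T * q ^ k) * Eth p (c' * x * T * q ^ k))" for k
  proof -
    have "Eth p ((c * T * q ^ k) / (p * x)) * Eth p ((c' * T * q ^ k) * (p * x))
       = ((c * T * q ^ k) / ((c' * T * q ^ k) * p * x^2)) * (Eth p ((c * T * q ^ k) / x) * Eth p ((c' * T * q ^ k) * x))"
      by (rule Eth_pair) (use assms in auto)
    moreover have "(c * T * q ^ k) / ((c' * T * q ^ k) * p * x^2) = c / (c' * p * x^2)"
      using assms by (simp add: field_simps)
    ultimately show ?thesis by (simp add: ac_simps)
  qed
  have "ep p q (c / (p * x) * T) (int m) * ep p q (c' * (p * x) * T) (int m)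
      = (\<Prod>k<m. Eth p (c / (p * x) * T * q ^ k) * Eth p (c' * (p * x) * T * q ^ k))"
    unfolding ep_def by (simp add: prod.distrib)
  also have "\<dots> = (\<Prod>k<m. (c / (c' * p * x^2)) * (Eth p (c / x * T * q ^ k) * Eth p (c' * x * T * q ^ k)))"
    by (rule prod.cong) (simp_all only: pt)
  also have "\<dots> = (c / (c' * p * x^2)) ^ m * (ep p q (c / x * T) (int m) * ep p q (c' * x * T) (int m))"
    unfolding ep_def by (simp only: prod.distrib prod_constant card_lessThan nat_int of_nat_0_le_iff if_True)
  finally show ?thesis .
qed

lemma part_nonneg: "0 \<le> part lam i"
  unfolding part_def by auto

lemma epl_pair:
  assumes "cmod p < 1" "p \<noteq> 0" "x \<noteq> 0" "c \<noteq> 0" "c' \<noteq> 0" "t \<noteq> 0" "q \<noteq> 0"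
  shows "epl p q t (c / (p * x)) lam * epl p q t (c' * (p * x)) lam
       = (c / (c' * p * x^2)) ^ (\<Sum>i\<in>{1..length lam}. nat (part lam i))
         * (epl p q t (c / x) lam * epl p q t (c' * x) lam)"
proof -
  have pt: "ep p q (c / (p * x) * t powi (1 - int i)) (part lam i) * ep p q (c' * (p * x) * t powi (1 - int i)) (part lam i)
     = (c / (c' * p * x^2)) ^ nat (part lam i) * (ep p q (c / x * t powi (1 - int i)) (part lam i) * ep p q (c' * x * t powi (1 - int i)) (part lam i))" for i
    using ep_pair[OF assms(1-5) _ assms(7), of "t powi (1 - int i)" "nat (part lam i)"] assms(6) part_nonneg[of lam i]
    by simp
  let ?I = "{1..length lam}"
  have "epl p q t (c / (p * x)) lam * epl p q t (c' * (p * x)) lam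
     = (\<Prod>i\<in>?I. ep p q (c / (p * x) * t powi (1 - int i)) (part lam i) * ep p q (c' * (p * x) * t powi (1 - int i)) (part lam i))"
    unfolding epl_def by (simp only: prod.distrib)
  also have "\<dots> = (\<Prod>i\<in>?I. (c / (c' * p * x^2)) ^ nat (part lam i) * (ep p q (c / x * t powi (1 - int i)) (part lam i) * ep p q (c' * x * t powi (1 - int i)) (part lam i)))"
    by (rule prod.cong) (simp_all only: pt)
  also have "\<dots> = (c / (c' * p * x^2)) ^ (\<Sum>i\<in>?I. nat (part lam i))
         * (epl p q t (c / x) lam * epl p q t (c' * x) lam)"
    unfolding epl_def by (simp only: prod.distrib power_sum)
  finally show ?thesis .
qed

lemma W1_quot:
  assumes "cmod p < 1" "p \<noteq> 0" "x \<noteq> 0" "a \<noteq> 0" "b \<noteq> 0" "t \<noteq> 0" "q \<noteq> 0"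
  shows "(epl p q t (1 / (p * x)) lam * epl p q t (a * (p * x)) lam
          * epl p q t (q * b * (p * x) / t) mu * epl p q t (q * b / (a * (p * x) * t)) mu)
       / (epl p q t (1 / (p * x)) mu * epl p q t (a * (p * x)) mu
          * epl p q t (q * b * (p * x)) lam * epl p q t (q * b / (a * (p * x))) lam)
       = (epl p q t (1 / x) lam * epl p q t (a * x) lam
          * epl p q t (q * b * x / t) mu * epl p q t (q * b / (a * x * t)) mu)
       / (epl p q t (1 / x) mu * epl p q t (a * x) mu
          * epl p q t (q * b * x) lam * epl p q t (q * b / (a * x)) lam)"
proof -
  define K where "K = 1 / (a * p * x^2)"
  define SL where "SL = (\<Sum>i\<in>{1..length lam}. nat (part lam i))"
  define SM where "SM = (\<Sum>i\<in>{1..length mu}. nat (part mu i))"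
  have K0: "K \<noteq> 0" using assms unfolding K_def by simp
  have r1: "\<And>l. epl p q t (1 / (p * x)) l * epl p q t (a * (p * x)) l
     = K ^ (\<Sum>i\<in>{1..length l}. nat (part l i)) * (epl p q t (1 / x) l * epl p q t (a * x) l)"
    using epl_pair[OF assms(1-3), of 1 a t q] assms unfolding K_def by simp
  have r2: "\<And>l. epl p q t (q * b * (p * x) / t) l * epl p q t (q * b / (a * (p * x) * t)) l
     = K ^ (\<Sum>i\<in>{1..length l}. nat (part l i)) * (epl p q t (q * b * x / t) l * epl p q t (q * b / (a * x * t)) l)"
  proof -
    fix l
    have e1: "q * b * (p * x) / t = (q * b / t) * (p * x)" "q * b / (a * (p * x) * t) = (q * b / (a * t)) / (p * x)"
      "q * b * x / t = (q * b / t) * x" "q * b / (a * x * t) = (q * b / (a * t)) / x" by (simp_all add: field_simps)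
    have e2: "(q * b / (a * t)) / ((q * b / t) * p * x^2) = K"
      unfolding K_def using assms by (simp add: field_simps)
    show "?thesis l" unfolding e1
      using epl_pair[OF assms(1-3), of "q * b / (a * t)" "q * b / t" t q l] assms
      by (simp only: e2 mult.commute[of "epl p q t (q * b / (a * t) / (p * x)) l"]
          mult.commute[of "epl p q t (q * b / (a * t) / x) l"]) simp
  qed
  have r3: "\<And>l. epl p q t (q * b * (p * x)) l * epl p q t (q * b / (a * (p * x))) l
     = K ^ (\<Sum>i\<in>{1..length l}. nat (part l i)) * (epl p q t (q * b * x) l * epl p q t (q * b / (a * x)) l)"
  proof -
    fix l
    have e1: "q * b / (a * (p * x)) = (q * b / a) / (p * x)" "q * b / (a * x) = (q * b / a) / x"
      by (simp_all add: field_simps)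
    have e2: "(q * b / a) / ((q * b) * p * x^2) = K"
      unfolding K_def using assms by (simp add: field_simps)
    show "?thesis l" unfolding e1
      using epl_pair[OF assms(1-3), of "q * b / a" "q * b" t q l] assms
      by (simp only: e2 mult.commute[of "epl p q t (q * b / a / (p * x)) l"]
          mult.commute[of "epl p q t (q * b / a / x) l"]) simp
  qed
  have num: "epl p q t (1 / (p * x)) lam * epl p q t (a * (p * x)) lam
          * epl p q t (q * b * (p * x) / t) mu * epl p q t (q * b / (a * (p * x) * t)) mu
     = (K ^ SL * K ^ SM) * (epl p q t (1 / x) lam * epl p q t (a * x) lam
          * epl p q t (q * b * x / t) mu * epl p q t (q * b / (a * x * t)) mu)"
  proof -
    have "epl p q t (1 / (p * x)) lam * epl p q t (a * (p * x)) lam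
          * epl p q t (q * b * (p * x) / t) mu * epl p q t (q * b / (a * (p * x) * t)) mu
        = (epl p q t (1 / (p * x)) lam * epl p q t (a * (p * x)) lam)
          * (epl p q t (q * b * (p * x) / t) mu * epl p q t (q * b / (a * (p * x) * t)) mu)"
      by (simp only: mult.assoc)
    also have "\<dots> = (K ^ SL * (epl p q t (1 / x) lam * epl p q t (a * x) lam))
        * (K ^ SM * (epl p q t (q * b * x / t) mu * epl p q t (q * b / (a * x * t)) mu))"
      unfolding SL_def SM_def r1 r2 ..
    finally show ?thesis by (simp only: mult_ac)
  qed
  have den: "epl p q t (1 / (p * x)) mu * epl p q t (a * (p * x)) mu
          * epl p q t (q * b * (p * x)) lam * epl p q t (q * b / (a * (p * x))) lam
     = (K ^ SL * K ^ SM) * (epl p q t (1 / x) mu * epl p q t (a * x) mu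
          * epl p q t (q * b * x) lam * epl p q t (q * b / (a * x)) lam)"
  proof -
    have "epl p q t (1 / (p * x)) mu * epl p q t (a * (p * x)) mu
          * epl p q t (q * b * (p * x)) lam * epl p q t (q * b / (a * (p * x))) lam
        = (epl p q t (1 / (p * x)) mu * epl p q t (a * (p * x)) mu)
          * (epl p q t (q * b * (p * x)) lam * epl p q t (q * b / (a * (p * x))) lam)"
      by (simp only: mult.assoc)
    also have "\<dots> = (K ^ SM * (epl p q t (1 / x) mu * epl p q t (a * x) mu))
        * (K ^ SL * (epl p q t (q * b * x) lam * epl p q t (q * b / (a * x)) lam))"
      unfolding SL_def SM_def r1 r3 ..
    finally show ?thesis by (simp only: mult_ac)
  qed
  show ?thesis unfolding num den using K0 by simp
qed

lemma hndr: "(h::complex) * n / d * r = h * (n / d) * r" by simp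

lemma W1_shift:
  assumes "cmod p < 1" "p \<noteq> 0" "x \<noteq> 0" "a \<noteq> 0" "b \<noteq> 0" "t \<noteq> 0" "q \<noteq> 0"
  shows "W1 p q t a b lam mu (p * x) = W1 p q t a b lam mu x"
  unfolding W1_def Let_def hndr W1_quot[OF assms] ..

lemma Wskew_shift:
  assumes "cmod p < 1" "p \<noteq> 0" "a \<noteq> 0" "b \<noteq> 0" "t \<noteq> 0" "q \<noteq> 0"
    "i < length xs" "xs ! i \<noteq> 0"
  shows "Wskew p q t a b lam mu (xs[i := p * xs ! i]) = Wskew p q t a b lam mu xs"
  using assms(7,8)
proof (induction xs arbitrary: i lam)
  case Nil
  then show ?case by simp
next
  case (Cons y zs)
  show ?case
  proof (cases i)
    case 0
    have "W1 p q t (a * t powi (2 * int (length zs))) (b * t powi (int (length zs))) lam nu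
           (p * y * t powi (- int (length zs)))
        = W1 p q t (a * t powi (2 * int (length zs))) (b * t powi (int (length zs))) lam nu
           (y * t powi (- int (length zs)))" for nu
      using W1_shift[OF assms(1,2) _ _ _ assms(5,6), of "y * t powi (- int (length zs))"
          "a * t powi (2 * int (length zs))" "b * t powi (int (length zs))" lam nu]
        Cons.prems assms 0 by (simp add: mult.assoc)
    then show ?thesis using 0 by simp
  next
    case (Suc j)
    then show ?thesis using Cons.prems Cons.IH[of j] by simp
  qed
qed

lemma powr_shift1:
  assumes "0 < q" "q < 1"
  shows "(of_real q :: complex) powr (z + 2 * pi * \<i> / of_real (ln q)) = of_real q powr z"
proof -
  have l: "ln q \<noteq> 0" using assms by simp
  have "(of_real q :: complex) powr (z + 2 * pi * \<i> / of_real (ln q))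
      = exp ((z + 2 * pi * \<i> / of_real (ln q)) * of_real (ln q))"
    using assms by (simp add: powr_def Ln_of_real)
  also have "(z + 2 * pi * \<i> / of_real (ln q)) * of_real (ln q) = z * of_real (ln q) + 2 * pi * \<i>"
    using l by (simp add: field_simps)
  also have "exp \<dots> = exp (z * of_real (ln q))" by (simp add: exp_add)
  also have "\<dots> = of_real q powr z" using assms by (simp add: powr_def Ln_of_real)
  finally show ?thesis .
qed

lemma powr_shift2:
  assumes "0 < q" "q < 1" "p \<noteq> 0"
  shows "(of_real q :: complex) powr (z + Ln p / of_real (ln q)) = p * of_real q powr z"
proof -
  have l: "ln q \<noteq> 0" using assms by simp
  have "(of_real q :: complex) powr (z + Ln p / of_real (ln q))
      = exp ((z + Ln p / of_real (ln q)) * of_real (ln q))"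
    using assms by (simp add: powr_def Ln_of_real)
  also have "(z + Ln p / of_real (ln q)) * of_real (ln q) = z * of_real (ln q) + Ln p"
    using l by (simp add: field_simps)
  also have "exp \<dots> = p * exp (z * of_real (ln q))" using assms by (simp add: exp_add)
  also have "\<dots> = p * of_real q powr z" using assms by (simp add: powr_def Ln_of_real)
  finally show ?thesis .
qed

theorem mainTheorem11:
  fixes q :: real and p t a b :: complex and n :: nat and lam :: "nat list"
    and u :: "nat \<Rightarrow> complex" and i :: nat
  assumes "0 < q" "q < 1" "0 < cmod p" "cmod p < 1"
    and "t \<noteq> 0" "a \<noteq> 0" "b \<noteq> 0"
    and "is_partition lam" "length lam = n" "i < n"
  defines "f \<equiv> (\<lambda>v :: nat \<Rightarrow> complex.
             Wpart p (of_real q) t a b lam (map (\<lambda>k. (of_real q) powr (v k)) [0..<n]))"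
  shows "f (u(i := u i + 2 * pi * \<i> / of_real (ln q))) = f u \<and>
         f (u(i := u i + Ln p / of_real (ln q))) = f u"
proof
  have "map (\<lambda>k. (of_real q :: complex) powr ((u(i := u i + 2 * pi * \<i> / of_real (ln q))) k)) [0..<n]
      = map (\<lambda>k. (of_real q) powr (u k)) [0..<n]"
    using powr_shift1[OF assms(1,2)] by (intro map_cong) auto
  then show "f (u(i := u i + 2 * pi * \<i> / of_real (ln q))) = f u" unfolding f_def by (simp only:)
next
  have p0: "p \<noteq> 0" using assms(3) by auto
  let ?xs = "map (\<lambda>k. (of_real q :: complex) powr (u k)) [0..<n]"
  have "map (\<lambda>k. (of_real q :: complex) powr ((u(i := u i + Ln p / of_real (ln q))) k)) [0..<n]
      = ?xs[i := p * ?xs ! i]"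
    using powr_shift2[OF assms(1,2) p0] assms(10)
    by (intro nth_equalityI) (auto simp: nth_list_update)
  moreover have "Wskew p (of_real q) t a b lam (replicate (length lam) 0) (?xs[i := p * ?xs ! i])
      = Wskew p (of_real q) t a b lam (replicate (length lam) 0) ?xs"
    using assms p0 by (intro Wskew_shift) auto
  ultimately show "f (u(i := u i + Ln p / of_real (ln q))) = f u" unfolding f_def Wpart_def by simp
qed

end
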